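(* For every division ring $K$, every torsion-free group $G$ and every integer $n\ge2$, there are no $a,b\in K[G]$ with $\operatorname{rank}(a)=2$, $\operatorname{rank}(b)=n$ and $ab=1$.
   Context: $K[G]$ is the group ring; the rank of an element is the number of group elements with nonzero coefficient. A group is torsion-free if its only element of finite order is the identity. *)

theory Defs
  imports Main
begin

text \<open>The group G is a type of class group_add (written additively, not necessarily
  commutative). Elements of the group ring K[G] are finitely supported functions G => K.\<close>

definition gsupp :: "('g \<Rightarrow> 'k::zero) \<Rightarrow> 'g set" where
  "gsupp a = {g. a g \<noteq> 0}"

definition in_group_ring :: "('g \<Rightarrow> 'k::zero) \<Rightarrow> bool" where
  "in_group_ring a \<longleftrightarrow> finite (gsupp a)"

definition grank :: "('g \<Rightarrow> 'k::zero) \<Rightarrow> nat" where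
  "grank a = card (gsupp a)"

definition gr_mult :: "('g::group_add \<Rightarrow> 'k::ring) \<Rightarrow> ('g \<Rightarrow> 'k) \<Rightarrow> ('g \<Rightarrow> 'k)" where
  "gr_mult a b = (\<lambda>g. \<Sum>x\<in>gsupp a. a x * b (- x + g))"

definition gr_one :: "'g::group_add \<Rightarrow> 'k::ring_1" where
  "gr_one = (\<lambda>g. if g = 0 then 1 else 0)"

definition gpow :: "nat \<Rightarrow> 'g::group_add \<Rightarrow> 'g" where
  "gpow n g = ((\<lambda>x. g + x) ^^ n) 0"

definition torsion_free :: "'g::group_add itself \<Rightarrow> bool" where
  "torsion_free _ \<longleftrightarrow> (\<forall>(g::'g) n. n > 0 \<and> gpow n g = 0 \<longrightarrow> g = 0)"

end

theory Submission
  imports Defs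
begin

lemma gpow_Suc: "gpow (Suc k) g = g + gpow k g"
  by (simp add: gpow_def)

lemma gpow_0: "gpow 0 g = 0"
  by (simp add: gpow_def)

lemma gpow_add: "gpow (d + i) u = gpow d u + gpow i u"
  by (induction d) (simp_all add: gpow_0 gpow_Suc add.assoc)

lemma gpow_nz:
  assumes "torsion_free TYPE('g::group_add)" "(u::'g) \<noteq> 0" "k > 0"
  shows "gpow k u \<noteq> 0"
  using assms unfolding torsion_free_def by blast

lemma gpow_inj:
  assumes "torsion_free TYPE('g::group_add)" "(u::'g) \<noteq> 0"
  shows "inj (\<lambda>k. gpow k u + x0)"
proof (rule injI)
  have main: "gpow i u \<noteq> gpow j u" if "i < j" for i j
  proof
    assume e: "gpow i u = gpow j u"
    define d where "d = j - i"
    have d: "j = d + i" "d > 0" using that unfolding d_def by auto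
    have "gpow d u + gpow i u = 0 + gpow i u" using e unfolding d(1) gpow_add by simp
    hence "gpow d u = 0" by (simp only: add_right_cancel)
    thus False using gpow_nz[OF assms d(2)] by simp
  qed
  fix i j assume "gpow i u + x0 = gpow j u + x0"
  hence "gpow i u = gpow j u" by (simp only: add_right_cancel)
  thus "i = j" using main[of i j] main[of j i] by (cases "i < j"; cases "j < i") auto
qed

theorem theorem6p2:
  fixes a b :: "'g::group_add \<Rightarrow> 'k::division_ring" and n :: nat
  assumes "torsion_free TYPE('g)" and "n \<ge> 2"
  shows "\<not> (in_group_ring a \<and> in_group_ring b \<and> grank a = 2 \<and> grank b = n
            \<and> gr_mult a b = gr_one)"
proof
  assume H: "in_group_ring a \<and> in_group_ring b \<and> grank a = 2 \<and> grank b = n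
            \<and> gr_mult a b = gr_one"
  obtain x y where xy: "gsupp a = {x, y}" "x \<noteq> y"
    using H unfolding grank_def by (metis card_2_iff)
  have ax: "a x \<noteq> 0" and ay: "a y \<noteq> 0" using xy(1) unfolding gsupp_def by blast+
  have fin: "finite (gsupp b)" using H unfolding in_group_ring_def by blast
  define t where "t = -y + x"
  define x0 where "x0 = - x"
  have t0: "t \<noteq> 0" unfolding t_def using xy(2)
    by (metis add.left_inverse add_left_cancel)
  have eq: "a x * b s + a y * b (t + s) = (if s = x0 then 1 else 0)" for s
  proof -
    have "gr_mult a b (x + s) = gr_one (x + s)" using H by simp
    moreover have "gr_mult a b (x + s) = a x * b s + a y * b (t + s)"
      unfolding gr_mult_def xy(1) t_def using xy(2) by (simp add: add.assoc)
    moreover have "(x + s = 0) = (s = x0)" unfolding x0_def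
      by (metis add.left_inverse add_minus_cancel add_right_cancel)
    ultimately show ?thesis unfolding gr_one_def by simp
  qed
  have step: "(b s \<noteq> 0) = (b (t + s) \<noteq> 0)" if "s \<noteq> x0" for s
  proof -
    have e: "a x * b s + a y * b (t + s) = 0" using eq[of s] that by simp
    show ?thesis
    proof
      assume "b s \<noteq> 0"
      hence "a x * b s \<noteq> 0" using ax by simp
      thus "b (t + s) \<noteq> 0" using e by auto
    next
      assume "b (t + s) \<noteq> 0"
      hence "a y * b (t + s) \<noteq> 0" using ay by simp
      thus "b s \<noteq> 0" using e by auto
    qed
  qed
  have mt0: "- t \<noteq> 0" using t0 by simp
  have "b x0 \<noteq> 0 \<or> b (t + x0) \<noteq> 0" using eq[of x0] by auto
  thus False
  proof
    assume P0: "b x0 \<noteq> 0"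
    have A: "b (gpow k (-t) + x0) \<noteq> 0" for k
    proof (induction k)
      case 0 thus ?case using P0 by (simp add: gpow_0)
    next
      case (Suc k)
      let ?s = "gpow (Suc k) (-t) + x0"
      have ne: "?s \<noteq> x0"
      proof
        assume "?s = x0"
        hence "gpow (Suc k) (-t) + x0 = 0 + x0" by simp
        hence "gpow (Suc k) (-t) = 0" by (simp only: add_right_cancel)
        thus False using gpow_nz[OF assms(1) mt0, of "Suc k"] by simp
      qed
      have "t + ?s = gpow k (-t) + x0" by (simp add: gpow_Suc add.assoc[symmetric])
      thus ?case using step[OF ne] Suc by simp
    qed
    have "range (\<lambda>k. gpow k (-t) + x0) \<subseteq> gsupp b" using A unfolding gsupp_def by auto
    moreover have "infinite (range (\<lambda>k. gpow k (-t) + x0))"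
      using gpow_inj[OF assms(1) mt0] finite_imageD infinite_UNIV_nat by blast
    ultimately show False using fin finite_subset by blast
  next
    assume P1: "b (t + x0) \<noteq> 0"
    have B: "b (gpow (Suc k) t + x0) \<noteq> 0" for k
    proof (induction k)
      case 0 thus ?case using P1 by (simp add: gpow_Suc gpow_0)
    next
      case (Suc k)
      let ?s = "gpow (Suc k) t + x0"
      have ne: "?s \<noteq> x0"
      proof
        assume "?s = x0"
        hence "gpow (Suc k) t + x0 = 0 + x0" by simp
        hence "gpow (Suc k) t = 0" by (simp only: add_right_cancel)
        thus False using gpow_nz[OF assms(1) t0, of "Suc k"] by simp
      qed
      have "t + ?s = gpow (Suc (Suc k)) t + x0" by (simp add: gpow_Suc add.assoc)
      thus ?case using step[OF ne] Suc by simp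
    qed
    have inj2: "inj (\<lambda>k. gpow (Suc k) t + x0)"
      using gpow_inj[OF assms(1) t0, of x0] unfolding inj_def by (metis add_right_cancel nat.inject)
    have "range (\<lambda>k. gpow (Suc k) t + x0) \<subseteq> gsupp b" using B unfolding gsupp_def by auto
    moreover have "infinite (range (\<lambda>k. gpow (Suc k) t + x0))"
      using inj2 finite_imageD infinite_UNIV_nat by blast
    ultimately show False using fin finite_subset by blast
  qed
qed

end
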